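(* Let $(L,[\cdot,\cdot],\alpha)$ be a Hom-Lie algebra over a field $F$ and let $\mu:L\to[0,1]$ be a fuzzy subset of $L$. Then the following are equivalent: (i) $\mu$ is a fuzzy Hom-Lie ideal of $L$; (ii) for every $t\in\mathrm{Im}(\mu)$ such that the strong upper level set $U(\mu^>,t)=\{x\in L:\mu(x)>t\}$ is nonempty, $U(\mu^>,t)$ is a Hom-Lie ideal of $L$.
   Context: A Hom-Lie algebra over $F$ is a triple $(L,[\cdot,\cdot],\alpha)$ with $L$ an $F$-vector space, $\alpha:L\to L$ linear and $[\cdot,\cdot]:L\times L\to L$ bilinear, such that $[x,y]=-[y,x]$ and $[\alpha(x),[y,z]]+[\alpha(y),[z,x]]+[\alpha(z),[x,y]]=0$ for all $x,y,z\in L$. A Hom-Lie subalgebra is a subspace $H$ with $\alpha(H)\subseteq H$ and $[x,y]\in H$ for all $x,y\in H$; it is a Hom-Lie ideal if moreover $[x,y]\in H$ for all $x\in H$, $y\in L$. A fuzzy subset of $L$ is a map $\mu:L\to[0,1]$. Writing $a\wedge b=\min\{a,b\}$, $a\vee b=\max\{a,b\}$, $\mu$ is a fuzzy Hom-Lie ideal if for all $x,y\in L$, $c\in F$: $\mu(x+y)\ge\mu(x)\wedge\mu(y)$, $\mu(cx)\ge\mu(x)$, $\mu([x,y])\ge\mu(x)\vee\mu(y)$, and $\mu(\alpha(x))\ge\mu(x)$. *)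

theory Defs
  imports Complex_Main
begin

definition hom_lie_algebra ::
  "('f::field \<Rightarrow> 'v::ab_group_add \<Rightarrow> 'v) \<Rightarrow> ('v \<Rightarrow> 'v \<Rightarrow> 'v) \<Rightarrow> ('v \<Rightarrow> 'v) \<Rightarrow> bool" where
  "hom_lie_algebra scale br alpha \<longleftrightarrow>
     Vector_Spaces.vector_space scale \<and>
     Vector_Spaces.linear scale scale alpha \<and>
     (\<forall>x. Vector_Spaces.linear scale scale (br x)) \<and>
     (\<forall>y. Vector_Spaces.linear scale scale (\<lambda>x. br x y)) \<and>
     (\<forall>x y. br x y = - br y x) \<and>
     (\<forall>x y z. br (alpha x) (br y z) + br (alpha y) (br z x) + br (alpha z) (br x y) = 0)"

definition hom_lie_subalgebra ::
  "('f::field \<Rightarrow> 'v::ab_group_add \<Rightarrow> 'v) \<Rightarrow> ('v \<Rightarrow> 'v \<Rightarrow> 'v) \<Rightarrow> ('v \<Rightarrow> 'v) \<Rightarrow> 'v set \<Rightarrow> bool" where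
  "hom_lie_subalgebra scale br alpha H \<longleftrightarrow>
     module.subspace scale H \<and> alpha ` H \<subseteq> H \<and> (\<forall>x\<in>H. \<forall>y\<in>H. br x y \<in> H)"

definition hom_lie_ideal ::
  "('f::field \<Rightarrow> 'v::ab_group_add \<Rightarrow> 'v) \<Rightarrow> ('v \<Rightarrow> 'v \<Rightarrow> 'v) \<Rightarrow> ('v \<Rightarrow> 'v) \<Rightarrow> 'v set \<Rightarrow> bool" where
  "hom_lie_ideal scale br alpha H \<longleftrightarrow>
     hom_lie_subalgebra scale br alpha H \<and> (\<forall>x\<in>H. \<forall>y. br x y \<in> H)"

definition fuzzy_subset :: "('v \<Rightarrow> real) \<Rightarrow> bool" where
  "fuzzy_subset mu \<longleftrightarrow> (\<forall>x. 0 \<le> mu x \<and> mu x \<le> 1)"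

definition fuzzy_hom_lie_ideal ::
  "('f::field \<Rightarrow> 'v::ab_group_add \<Rightarrow> 'v) \<Rightarrow> ('v \<Rightarrow> 'v \<Rightarrow> 'v) \<Rightarrow> ('v \<Rightarrow> 'v) \<Rightarrow> ('v \<Rightarrow> real) \<Rightarrow> bool" where
  "fuzzy_hom_lie_ideal scale br alpha mu \<longleftrightarrow>
     fuzzy_subset mu \<and>
     (\<forall>x y. mu (x + y) \<ge> min (mu x) (mu y)) \<and>
     (\<forall>c x. mu (scale c x) \<ge> mu x) \<and>
     (\<forall>x y. mu (br x y) \<ge> max (mu x) (mu y)) \<and>
     (\<forall>x. mu (alpha x) \<ge> mu x)"

definition strong_level_set :: "('v \<Rightarrow> real) \<Rightarrow> real \<Rightarrow> 'v set" where
  "strong_level_set mu t = {x. mu x > t}"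

end

theory Submission
  imports Defs
begin

theorem theorem4p4:
  fixes scale :: "'f::field \<Rightarrow> 'v::ab_group_add \<Rightarrow> 'v"
    and br :: "'v \<Rightarrow> 'v \<Rightarrow> 'v" and alpha :: "'v \<Rightarrow> 'v" and mu :: "'v \<Rightarrow> real"
  assumes "hom_lie_algebra scale br alpha"
    and "fuzzy_subset mu"
  shows "fuzzy_hom_lie_ideal scale br alpha mu \<longleftrightarrow>
         (\<forall>t \<in> range mu. strong_level_set mu t \<noteq> {} \<longrightarrow>
             hom_lie_ideal scale br alpha (strong_level_set mu t))"
proof -
  have vs: "Vector_Spaces.vector_space scale" using assms(1) unfolding hom_lie_algebra_def by blast
  then have md: "module scale" by (simp add: vector_space_def module_def)
  have anti: "\<And>x y. br x y = - br y x" using assms(1) unfolding hom_lie_algebra_def by blast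
  show ?thesis
  proof
    assume F: "fuzzy_hom_lie_ideal scale br alpha mu"
    show "\<forall>t \<in> range mu. strong_level_set mu t \<noteq> {} \<longrightarrow>
             hom_lie_ideal scale br alpha (strong_level_set mu t)"
    proof (intro ballI impI)
      fix t assume "t \<in> range mu" and ne: "strong_level_set mu t \<noteq> {}"
      then obtain x0 where x0: "mu x0 > t" unfolding strong_level_set_def by auto
      have "mu (scale 0 x0) \<ge> mu x0" using F unfolding fuzzy_hom_lie_ideal_def by blast
      moreover have "scale 0 x0 = 0" using module.scale_zero_left[OF md] by blast
      ultimately have z: "mu 0 > t" using x0 by simp
      have add: "\<And>x y. mu x > t \<Longrightarrow> mu y > t \<Longrightarrow> mu (x+y) > t"
        using F unfolding fuzzy_hom_lie_ideal_def by (meson less_le_trans min_less_iff_conj not_le)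
      have sc: "\<And>c x. mu x > t \<Longrightarrow> mu (scale c x) > t"
        using F unfolding fuzzy_hom_lie_ideal_def by (meson less_le_trans)
      have al: "\<And>x. mu x > t \<Longrightarrow> mu (alpha x) > t"
        using F unfolding fuzzy_hom_lie_ideal_def by (meson less_le_trans)
      have b: "\<And>x y. mu x > t \<Longrightarrow> mu (br x y) > t"
        using F unfolding fuzzy_hom_lie_ideal_def by (meson less_le_trans max.cobounded1)
      show "hom_lie_ideal scale br alpha (strong_level_set mu t)"
        unfolding hom_lie_ideal_def hom_lie_subalgebra_def module.subspace_def[OF md]
          strong_level_set_def
        using z add sc al b by auto
    qed
  next
    assume R: "\<forall>t \<in> range mu. strong_level_set mu t \<noteq> {} \<longrightarrow>
             hom_lie_ideal scale br alpha (strong_level_set mu t)"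
    have key: "\<And>z x. mu x > mu z \<Longrightarrow> hom_lie_ideal scale br alpha (strong_level_set mu (mu z))"
      using R unfolding strong_level_set_def by auto
    have S: "\<And>z x. mu x > mu z \<Longrightarrow> module.subspace scale (strong_level_set mu (mu z))"
      using key unfolding hom_lie_ideal_def hom_lie_subalgebra_def by blast
    show "fuzzy_hom_lie_ideal scale br alpha mu"
      unfolding fuzzy_hom_lie_ideal_def
    proof (intro conjI allI)
      show "fuzzy_subset mu" by (rule assms(2))
    next
      fix x y show "min (mu x) (mu y) \<le> mu (x + y)"
      proof (rule ccontr)
        assume "\<not> ?thesis"
        then have a: "mu x > mu (x+y)" "mu y > mu (x+y)" by auto
        have "x + y \<in> strong_level_set mu (mu (x+y))"
          using module.subspace_add[OF md S[OF a(1)]] a unfolding strong_level_set_def by auto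
        then show False unfolding strong_level_set_def by auto
      qed
    next
      fix c x show "mu x \<le> mu (scale c x)"
      proof (rule ccontr)
        assume "\<not> ?thesis"
        then have a: "mu x > mu (scale c x)" by auto
        have "scale c x \<in> strong_level_set mu (mu (scale c x))"
          using module.subspace_scale[OF md S[OF a]] a unfolding strong_level_set_def by auto
        then show False unfolding strong_level_set_def by auto
      qed
    next
      fix x y show "max (mu x) (mu y) \<le> mu (br x y)"
      proof (rule ccontr)
        assume "\<not> ?thesis"
        then have "mu x > mu (br x y) \<or> mu y > mu (br x y)" by auto
        then show False
        proof
          assume a: "mu x > mu (br x y)"
          have "br x y \<in> strong_level_set mu (mu (br x y))"
            using key[OF a] a unfolding hom_lie_ideal_def strong_level_set_def by auto
          then show False unfolding strong_level_set_def by auto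
        next
          assume a: "mu y > mu (br x y)"
          have "br y x \<in> strong_level_set mu (mu (br x y))"
            using key[OF a] a unfolding hom_lie_ideal_def strong_level_set_def by auto
          then have "- br y x \<in> strong_level_set mu (mu (br x y))"
            using module.subspace_neg[OF md S[OF a]] by blast
          then show False using anti[of x y] unfolding strong_level_set_def by auto
        qed
      qed
    next
      fix x show "mu x \<le> mu (alpha x)"
      proof (rule ccontr)
        assume "\<not> ?thesis"
        then have a: "mu x > mu (alpha x)" by auto
        have "alpha x \<in> strong_level_set mu (mu (alpha x))"
          using key[OF a] a unfolding hom_lie_ideal_def hom_lie_subalgebra_def strong_level_set_def by auto
        then show False unfolding strong_level_set_def by auto
      qed
    qed
  qed
qed

end
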